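(* Let $(\Omega,\mathcal H,\mathbb E)$ be a sublinear expectation space with $\mathbb E[\cdot]=\sup_{\theta\in\Theta}E_{P_\theta}[\cdot]$, where $\{P_\theta\}_{\theta\in\Theta}$ is a countably-dimensional weakly compact family of probability measures on $(\Omega,\sigma(\mathcal H))$, and consider a discrete memoryless uncertain-distribution channel $[\mathcal X,\{\boldsymbol P_\lambda\}_{\lambda\in\Lambda},\mathcal Y]$ with finite alphabets. Then for any $R_c<\overline C$ and any $\epsilon>0$ there exist a sufficiently large $n$ and a $(M,n,\varphi_n,\psi_n)$ nonlinear channel code with coding rate $R_c$ such that $$\mathcal E\big[I_{\{\hat S\ne S\}}\big]=\inf_{\theta\in\Theta}P^{(n)}_{e,\theta}<\epsilon.$$
   Context: Sublinear expectation space: $\mathcal H$ a linear space of real functions on $\Omega$ (containing constants, closed under $|\cdot|$ and under bounded Borel functions of finitely many elements), $\mathbb E$ monotone, constant preserving, subadditive and positively homogeneous; conjugate $\mathcal E[X]=-\mathbb E[-X]=\inf_\theta E_{P_\theta}[X]$. Countably-dimensional weakly compact: for any bounded $Y_1,Y_2,\dots\in\mathcal H$ and any sequence $\{P_n\}\subset\{P_\theta\}$ there are a subsequence $\{n_k\}$ and $P\in\{P_\theta\}$ with $\lim_kP_{n_k}(\phi(Y_1,\dots,Y_d))=P(\phi(Y_1,\dots,Y_d))$ for every $d$ and bounded continuous $\phi$ on $\mathbb R^d$. Channel: $\boldsymbol P_\lambda=(p_\lambda(y|x))$ transition matrices from $\mathcal X$ to $\mathcal Y$; memoryless means that for inputs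 $X_1,\dots,X_n$ and outputs $Y_1,\dots,Y_n$ on the space, $\{P_\theta(Y_1=y_1,\dots,Y_n=y_n|X_1=x_1,\dots,X_n=x_n)\}_{\theta}=\{\prod_i p_\lambda(y_i|x_i)\}_{\lambda}$ for all $x_i,y_i$. A $(M,n,\varphi_n,\psi_n)$ nonlinear channel code: message set $\mathcal S=\{1,\dots,M\}$, encoder $\varphi_n:\mathcal S\to\mathcal X^n$, decoder $\psi_n:\mathcal Y^n\to\mathcal S$, rate $\frac{\log M}{n}$; message $S$ is a random variable on the space, $\boldsymbol X^n=\varphi_n(S)$, $\boldsymbol Y^n$ the channel output, $\hat S=\psi_n(\boldsymbol Y^n)$, $P^{(n)}_{e,\theta}=P_\theta(\hat S\ne S)$. $\overline C=\sup_p\sup_{\lambda}\sum_{x,y}p(x)p_\lambda(y|x)\log\frac{p_\lambda(y|x)}{\sum_{x'}p(x')p_\lambda(y|x')}$, supremum over distributions $p$ on $\mathcal X$. *)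

theory Defs
  imports "HOL-Probability.Probability"
begin

text \<open>Elements of R^d are represented as extensional functions on the index set
  {..<d}, i.e. elements of PiE {..<d} (\<lambda>_. UNIV), carrying the product
  topology / product Borel sigma algebra.\<close>

definition sle_space :: "('w \<Rightarrow> real) set \<Rightarrow> bool" where
  "sle_space H \<longleftrightarrow>
     (\<forall>c. (\<lambda>\<omega>. c) \<in> H) \<and>
     (\<forall>X\<in>H. \<forall>Y\<in>H. (\<lambda>\<omega>. X \<omega> + Y \<omega>) \<in> H) \<and>
     (\<forall>X\<in>H. \<forall>c. (\<lambda>\<omega>. c * X \<omega>) \<in> H) \<and>
     (\<forall>X\<in>H. (\<lambda>\<omega>. \<bar>X \<omega>\<bar>) \<in> H) \<and>
     (\<forall>d (Xs :: nat \<Rightarrow> 'w \<Rightarrow> real) (f :: (nat \<Rightarrow> real) \<Rightarrow> real).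
        (\<forall>i<d. Xs i \<in> H) \<and> f \<in> borel_measurable (PiM {..<d} (\<lambda>_. borel)) \<and>
        bounded (f ` PiE {..<d} (\<lambda>_. UNIV))
        \<longrightarrow> (\<lambda>\<omega>. f (\<lambda>i\<in>{..<d}. Xs i \<omega>)) \<in> H)"

definition sigmaH :: "('w \<Rightarrow> real) set \<Rightarrow> 'w measure" where
  "sigmaH H = sigma UNIV {X -` B | X B. X \<in> H \<and> B \<in> sets borel}"

definition upper_E :: "('t \<Rightarrow> 'w measure) \<Rightarrow> ('w \<Rightarrow> real) \<Rightarrow> real" where
  "upper_E P X = (SUP \<theta>. integral\<^sup>L (P \<theta>) X)"

definition lower_E :: "('t \<Rightarrow> 'w measure) \<Rightarrow> ('w \<Rightarrow> real) \<Rightarrow> real" where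
  "lower_E P X = - upper_E P (\<lambda>\<omega>. - X \<omega>)"

text \<open>The family {P_theta} is a family of probability measures on (Omega, sigma(H))
  representing the sublinear expectation on H (so that E[X] = sup_theta E_{P_theta}[X]
  is a finite real number for X in H).\<close>
definition represents :: "('w \<Rightarrow> real) set \<Rightarrow> ('t \<Rightarrow> 'w measure) \<Rightarrow> bool" where
  "represents H P \<longleftrightarrow>
     (\<forall>\<theta>. prob_space (P \<theta>) \<and> sets (P \<theta>) = sets (sigmaH H) \<and> space (P \<theta>) = UNIV) \<and>
     (\<forall>X\<in>H. (\<forall>\<theta>. integrable (P \<theta>) X) \<and> bdd_above (range (\<lambda>\<theta>. integral\<^sup>L (P \<theta>) X)))"

definition cd_weakly_compact :: "('w \<Rightarrow> real) set \<Rightarrow> ('t \<Rightarrow> 'w measure) \<Rightarrow> bool" where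
  "cd_weakly_compact H P \<longleftrightarrow>
     (\<forall>(Ys :: nat \<Rightarrow> 'w \<Rightarrow> real) (th :: nat \<Rightarrow> 't).
        (\<forall>k. Ys k \<in> H \<and> bounded (range (Ys k))) \<longrightarrow>
        (\<exists>r \<theta>0. strict_mono r \<and>
           (\<forall>d (\<phi> :: (nat \<Rightarrow> real) \<Rightarrow> real).
              continuous_on (PiE {..<d} (\<lambda>_. UNIV)) \<phi> \<and> bounded (\<phi> ` PiE {..<d} (\<lambda>_. UNIV))
              \<longrightarrow> (\<lambda>k. integral\<^sup>L (P (th (r k))) (\<lambda>\<omega>. \<phi> (\<lambda>i\<in>{..<d}. Ys i \<omega>)))
                    \<longlonglongrightarrow> integral\<^sup>L (P \<theta>0) (\<lambda>\<omega>. \<phi> (\<lambda>i\<in>{..<d}. Ys i \<omega>)))))"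

definition H_rv :: "('w \<Rightarrow> real) set \<Rightarrow> ('w \<Rightarrow> 'a) \<Rightarrow> bool" where
  "H_rv H Z \<longleftrightarrow> (\<forall>a. (indicator {\<omega>. Z \<omega> = a} :: 'w \<Rightarrow> real) \<in> H)"

definition stochastic :: "('l \<Rightarrow> 'x::finite \<Rightarrow> 'y::finite \<Rightarrow> real) \<Rightarrow> bool" where
  "stochastic p \<longleftrightarrow> (\<forall>l x y. 0 \<le> p l x y) \<and> (\<forall>l x. (\<Sum>y\<in>UNIV. p l x y) = 1)"

text \<open>Memoryless relation between inputs X = (X_1..X_n) and outputs Y = (Y_1..Y_n):
  the family of conditional laws {P_theta(Y = ys | X = xs)}_theta coincides with
  the family of product kernels {prod_i p_lambda(y_i|x_i)}_lambda.  Conditional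
  probabilities are written in multiplied-out form (they are only meaningful for
  inputs of positive probability).\<close>
definition kernel_match ::
  "('t \<Rightarrow> 'w measure) \<Rightarrow> ('l \<Rightarrow> 'x \<Rightarrow> 'y \<Rightarrow> real) \<Rightarrow> nat \<Rightarrow>
   ('w \<Rightarrow> 'x list) \<Rightarrow> ('w \<Rightarrow> 'y list) \<Rightarrow> 't \<Rightarrow> 'l \<Rightarrow> bool" where
  "kernel_match P p n X Y \<theta> l \<longleftrightarrow>
     (\<forall>xs ys. length xs = n \<longrightarrow> length ys = n \<longrightarrow>
        measure (P \<theta>) {\<omega>. X \<omega> = xs \<and> Y \<omega> = ys} =
        measure (P \<theta>) {\<omega>. X \<omega> = xs} * (\<Prod>i<n. p l (xs ! i) (ys ! i)))"

definition memoryless ::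
  "('t \<Rightarrow> 'w measure) \<Rightarrow> ('l \<Rightarrow> 'x \<Rightarrow> 'y \<Rightarrow> real) \<Rightarrow> nat \<Rightarrow>
   ('w \<Rightarrow> 'x list) \<Rightarrow> ('w \<Rightarrow> 'y list) \<Rightarrow> bool" where
  "memoryless P p n X Y \<longleftrightarrow>
     (\<forall>\<theta>. \<exists>l. kernel_match P p n X Y \<theta> l) \<and> (\<forall>l. \<exists>\<theta>. kernel_match P p n X Y \<theta> l)"

text \<open>Mutual information (base-2 logarithm; note log 2 0 = 0, giving 0 log 0 = 0).\<close>
definition mutual_info :: "('x::finite \<Rightarrow> real) \<Rightarrow> ('x \<Rightarrow> 'y::finite \<Rightarrow> real) \<Rightarrow> real" where
  "mutual_info q W = (\<Sum>x\<in>UNIV. \<Sum>y\<in>UNIV.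
      q x * W x y * log 2 (W x y / (\<Sum>x'\<in>UNIV. q x' * W x' y)))"

definition is_distr :: "('x::finite \<Rightarrow> real) \<Rightarrow> bool" where
  "is_distr q \<longleftrightarrow> (\<forall>x. 0 \<le> q x) \<and> (\<Sum>x\<in>UNIV. q x) = 1"

definition upper_capacity :: "('l \<Rightarrow> 'x::finite \<Rightarrow> 'y::finite \<Rightarrow> real) \<Rightarrow> real" where
  "upper_capacity p = Sup {mutual_info q (p l) | q l. is_distr q}"

end

theory Submission
  imports Defs
begin

abbreviation Ln :: "nat \<Rightarrow> 'a list set" where "Ln n \<equiv> {xs. length xs = n}"

lemma finite_Ln: "finite (Ln n :: 'a::finite list set)"
  using finite_lists_length_eq[of "UNIV::'a set" n] by simp

lemma sum_Ln_Suc: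
  fixes F :: "'a::finite list \<Rightarrow> real"
  shows "sum F (Ln (Suc n)) = (\<Sum>x\<in>UNIV. \<Sum>xs\<in>Ln n. F (x # xs))"
proof -
  have e: "Ln (Suc n) = (\<lambda>(x,xs). x#xs) ` (UNIV \<times> Ln n)"
    by (auto simp: length_Suc_conv image_iff)
  have i: "inj_on (\<lambda>(x,xs). x#xs) (UNIV \<times> (Ln n :: 'a list set))"
    by (auto simp: inj_on_def)
  show ?thesis unfolding e sum.reindex[OF i] sum.cartesian_product by (simp add: case_prod_beta)
qed

lemma sum_Ln_0: "sum F (Ln 0) = F []" by simp

fun pw :: "('a \<Rightarrow> 'b \<Rightarrow> real) \<Rightarrow> 'a list \<Rightarrow> 'b list \<Rightarrow> real" where
  "pw r [] [] = 1"
| "pw r (x#xs) (y#ys) = r x y * pw r xs ys"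
| "pw r _ _ = 0"

fun ts :: "('a \<Rightarrow> 'b \<Rightarrow> real) \<Rightarrow> 'a list \<Rightarrow> 'b list \<Rightarrow> real" where
  "ts g (x#xs) (y#ys) = g x y + ts g xs ys"
| "ts g _ _ = 0"

definition pl :: "('a \<Rightarrow> real) \<Rightarrow> 'a list \<Rightarrow> real" where
  "pl q xs = prod_list (map q xs)"

lemma pl_simps[simp]: "pl q [] = 1" "pl q (x#xs) = q x * pl q xs"
  by (simp_all add: pl_def)

lemma pw_nonneg: "(\<And>x y. r x y \<ge> 0) \<Longrightarrow> pw r xs ys \<ge> 0"
  by (induction r xs ys rule: pw.induct) auto

lemma pl_nonneg: "(\<And>x. q x \<ge> 0) \<Longrightarrow> pl q xs \<ge> 0"
  by (induction xs) auto

lemma sum_pw: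
  fixes r :: "'a::finite \<Rightarrow> 'b::finite \<Rightarrow> real"
  assumes "(\<Sum>x\<in>UNIV. \<Sum>y\<in>UNIV. r x y) = 1"
  shows "(\<Sum>xs\<in>Ln n. \<Sum>ys\<in>Ln n. pw r xs ys) = 1"
proof (induction n)
  case (Suc n)
  have "(\<Sum>xs\<in>Ln (Suc n). \<Sum>ys\<in>Ln (Suc n). pw r xs ys)
      = (\<Sum>x\<in>UNIV. \<Sum>y\<in>UNIV. r x y * (\<Sum>xs\<in>Ln n. \<Sum>ys\<in>Ln n. pw r xs ys))"
    by (simp add: sum_Ln_Suc sum_distrib_left sum.swap[of _ UNIV "Ln n"])
  also have "\<dots> = 1" using Suc assms by simp
  finally show ?case .
qed simp

lemma sum_pw_ts:
  fixes r :: "'a::finite \<Rightarrow> 'b::finite \<Rightarrow> real"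
  assumes "(\<Sum>x\<in>UNIV. \<Sum>y\<in>UNIV. r x y) = 1"
  shows "(\<Sum>xs\<in>Ln n. \<Sum>ys\<in>Ln n. pw r xs ys * ts g xs ys) = n * (\<Sum>x\<in>UNIV. \<Sum>y\<in>UNIV. r x y * g x y)"
proof (induction n)
  case (Suc n)
  have "(\<Sum>xs\<in>Ln (Suc n). \<Sum>ys\<in>Ln (Suc n). pw r xs ys * ts g xs ys)
      = (\<Sum>x\<in>UNIV. \<Sum>y\<in>UNIV. r x y * g x y * (\<Sum>xs\<in>Ln n. \<Sum>ys\<in>Ln n. pw r xs ys)
            + r x y * (\<Sum>xs\<in>Ln n. \<Sum>ys\<in>Ln n. pw r xs ys * ts g xs ys))"
    by (simp add: sum_Ln_Suc sum_distrib_left sum.swap[of _ UNIV "Ln n"] algebra_simps sum.distrib)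
  also have "\<dots> = Suc n * (\<Sum>x\<in>UNIV. \<Sum>y\<in>UNIV. r x y * g x y)"
    using Suc sum_pw[OF assms, of n] assms
    by (simp add: sum.distrib algebra_simps sum_distrib_left[symmetric] sum_distrib_right[symmetric])
  finally show ?case .
qed simp

lemma sum_pw_ts2:
  fixes r :: "'a::finite \<Rightarrow> 'b::finite \<Rightarrow> real"
  assumes "(\<Sum>x\<in>UNIV. \<Sum>y\<in>UNIV. r x y) = 1"
    and "(\<Sum>x\<in>UNIV. \<Sum>y\<in>UNIV. r x y * g x y) = 0"
  shows "(\<Sum>xs\<in>Ln n. \<Sum>ys\<in>Ln n. pw r xs ys * (ts g xs ys)^2) = n * (\<Sum>x\<in>UNIV. \<Sum>y\<in>UNIV. r x y * (g x y)^2)"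
proof (induction n)
  case (Suc n)
  have "(\<Sum>xs\<in>Ln (Suc n). \<Sum>ys\<in>Ln (Suc n). pw r xs ys * (ts g xs ys)^2)
      = (\<Sum>x\<in>UNIV. \<Sum>y\<in>UNIV. r x y * (g x y)^2 * (\<Sum>xs\<in>Ln n. \<Sum>ys\<in>Ln n. pw r xs ys)
            + 2 * (r x y * g x y) * (\<Sum>xs\<in>Ln n. \<Sum>ys\<in>Ln n. pw r xs ys * ts g xs ys)
            + r x y * (\<Sum>xs\<in>Ln n. \<Sum>ys\<in>Ln n. pw r xs ys * (ts g xs ys)^2))"
    by (simp add: sum_Ln_Suc sum_distrib_left sum.swap[of _ UNIV "Ln n"] algebra_simps sum.distrib power2_eq_square)
  also have "\<dots> = Suc n * (\<Sum>x\<in>UNIV. \<Sum>y\<in>UNIV. r x y * (g x y)^2)"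
    using Suc sum_pw[OF assms(1), of n] sum_pw_ts[OF assms(1), where n=n and g=g] assms
    by (simp add: sum.distrib algebra_simps sum_distrib_left[symmetric] sum_distrib_right[symmetric])
  finally show ?case .
qed simp

lemma feinstein:
  fixes Qn :: "'a \<Rightarrow> real" and Wn :: "'a \<Rightarrow> 'b \<Rightarrow> real"
  assumes fA: "finite A" and fB: "finite B"
    and Qnn: "\<And>a. Qn a \<ge> 0" and Qs: "(\<Sum>a\<in>A. Qn a) = 1"
    and Wnn: "\<And>a b. Wn a b \<ge> 0" and Ws: "\<And>a. a \<in> A \<Longrightarrow> (\<Sum>b\<in>B. Wn a b) = 1"
    and c: "c > 0" and e: "0 < e" "e \<le> 1/3"
  shows "\<exists>M x Bs. (\<forall>j\<in>{1..M}. x j \<in> A \<and> Bs j \<subseteq> B \<and> (\<Sum>b\<in>Bs j. Wn (x j) b) \<ge> 1 - e)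
     \<and> (\<forall>j\<in>{1..M}. \<forall>k\<in>{1..M}. j \<noteq> k \<longrightarrow> Bs j \<inter> Bs k = {}) \<and> inj_on x {1..(M::nat)}
     \<and> e - (\<Sum>a\<in>A. \<Sum>b\<in>B. if Wn a b > c * (\<Sum>a'\<in>A. Qn a' * Wn a' b) then 0 else Qn a * Wn a b) \<le> real M / c"
proof -
  define PY where "PY b = (\<Sum>a'\<in>A. Qn a' * Wn a' b)" for b
  define D where "D a = {b\<in>B. Wn a b > c * PY b}" for a
  define valid where "valid M x Bs \<longleftrightarrow> (\<forall>j\<in>{1..M}. x j \<in> A \<and> Bs j \<subseteq> D (x j) \<and> (\<Sum>b\<in>Bs j. Wn (x j) b) \<ge> 1 - e)
     \<and> (\<forall>j\<in>{1..M}. \<forall>k\<in>{1..M}. j \<noteq> k \<longrightarrow> Bs j \<inter> Bs k = {})" for M :: nat and x :: "nat \<Rightarrow> 'a" and Bs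
  have DB: "D a \<subseteq> B" for a by (auto simp: D_def)
  have bound: "M \<le> card B" if vM: "valid M x Bs" for M x Bs
  proof -
    have dj: "\<forall>j\<in>{1..M}. \<forall>k\<in>{1..M}. j \<noteq> k \<longrightarrow> Bs j \<inter> Bs k = {}"
      using vM unfolding valid_def by blast
    have sub: "Bs j \<subseteq> B" if "j \<in> {1..M}" for j
      using that vM DB unfolding valid_def by blast
    have fin: "finite (Bs j)" if "j \<in> {1..M}" for j
      using sub[OF that] fB by (rule finite_subset)
    have ne: "Bs j \<noteq> {}" if "j \<in> {1..M}" for j
    proof
      assume "Bs j = {}"
      moreover have "1 - e \<le> (\<Sum>b\<in>Bs j. Wn (x j) b)" using that vM unfolding valid_def by blast
      ultimately show False using e by simp
    qed
    have "card (\<Union>j\<in>{1..M}. Bs j) = (\<Sum>j\<in>{1..M}. card (Bs j))"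
      by (rule card_UN_disjoint) (use fin dj in blast)+
    also have "\<dots> \<ge> (\<Sum>j\<in>{1..M}. 1)"
      by (rule sum_mono) (use fin ne in \<open>simp add: Suc_le_eq card_gt_0_iff\<close>)
    moreover have "card (\<Union>j\<in>{1..M}. Bs j) \<le> card B"
      by (rule card_mono[OF fB]) (use sub in blast)
    ultimately show ?thesis by simp
  qed
  define Ms where "Ms = {M. \<exists>x Bs. valid M x Bs}"
  have "valid 0 x Bs" for x Bs by (simp add: valid_def)
  hence "0 \<in> Ms" by (auto simp: Ms_def)
  have fMs: "finite Ms"
  proof (rule finite_subset[of _ "{..card B}"])
    show "Ms \<subseteq> {..card B}" using bound unfolding Ms_def by blast
  qed simp
  define M where "M = Max Ms"
  have "M \<in> Ms" unfolding M_def using fMs \<open>0 \<in> Ms\<close> by (intro Max_in) auto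
  then obtain x Bs where v: "valid M x Bs" by (auto simp: Ms_def)
  define U where "U = (\<Union>j\<in>{1..M}. Bs j)"
  have UB: "U \<subseteq> B" using v DB by (force simp: U_def valid_def)
  have maxi: "(\<Sum>b\<in>D a - U. Wn a b) < 1 - e" if "a \<in> A" for a
  proof (rule ccontr)
    assume na: "\<not> ?thesis"
    define x' where "x' = x(Suc M := a)"
    define Bs' where "Bs' = Bs(Suc M := D a - U)"
    have v1: "\<forall>j\<in>{1..M}. x j \<in> A \<and> Bs j \<subseteq> D (x j) \<and> (\<Sum>b\<in>Bs j. Wn (x j) b) \<ge> 1 - e"
      and v2: "\<forall>j\<in>{1..M}. \<forall>k\<in>{1..M}. j \<noteq> k \<longrightarrow> Bs j \<inter> Bs k = {}"
      using v unfolding valid_def by blast+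
    have p1: "\<forall>j\<in>{1..Suc M}. x' j \<in> A \<and> Bs' j \<subseteq> D (x' j) \<and> (\<Sum>b\<in>Bs' j. Wn (x' j) b) \<ge> 1 - e"
    proof
      fix j assume j: "j \<in> {1..Suc M}"
      show "x' j \<in> A \<and> Bs' j \<subseteq> D (x' j) \<and> (\<Sum>b\<in>Bs' j. Wn (x' j) b) \<ge> 1 - e"
      proof (cases "j = Suc M")
        case True thus ?thesis using that na by (auto simp: x'_def Bs'_def)
      next
        case False thus ?thesis using j v1 by (auto simp: x'_def Bs'_def)
      qed
    qed
    have p2: "\<forall>j\<in>{1..Suc M}. \<forall>k\<in>{1..Suc M}. j \<noteq> k \<longrightarrow> Bs' j \<inter> Bs' k = {}"
    proof (intro ballI impI)
      fix j k assume j: "j \<in> {1..Suc M}" and k: "k \<in> {1..Suc M}" and jk: "j \<noteq> k"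
      show "Bs' j \<inter> Bs' k = {}"
      proof (cases "j = Suc M")
        case True
        hence "k \<in> {1..M}" using k jk by auto
        thus ?thesis using True by (auto simp: Bs'_def U_def)
      next
        case False
        hence j': "j \<in> {1..M}" using j by auto
        show ?thesis
        proof (cases "k = Suc M")
          case True thus ?thesis using j' by (auto simp: Bs'_def U_def)
        next
          case False
          hence "k \<in> {1..M}" using k by auto
          thus ?thesis using j' v2 jk \<open>j \<noteq> Suc M\<close> False by (auto simp: Bs'_def)
        qed
      qed
    qed
    have "valid (Suc M) x' Bs'" unfolding valid_def using p1 p2 by blast
    hence "Suc M \<in> Ms" by (auto simp: Ms_def)
    hence "Suc M \<le> M" unfolding M_def using fMs by simp
    thus False by simp
  qed
  have vA: "x j \<in> A" and vD: "Bs j \<subseteq> D (x j)" and vS: "(\<Sum>b\<in>Bs j. Wn (x j) b) \<ge> 1 - e"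
    if "j \<in> {1..M}" for j
    using v that unfolding valid_def by blast+
  have disj: "\<forall>j\<in>{1..M}. \<forall>k\<in>{1..M}. j \<noteq> k \<longrightarrow> Bs j \<inter> Bs k = {}" using v unfolding valid_def by blast
  have vB: "Bs j \<subseteq> B" if "j \<in> {1..M}" for j using vD[OF that] DB by blast
  have fin: "finite (Bs j)" if "j \<in> {1..M}" for j
    using vB[OF that] fB by (rule finite_subset)
  have le1: "(\<Sum>b\<in>S. Wn a b) \<le> 1" if "S \<subseteq> B" "a \<in> A" for S a
  proof -
    have "(\<Sum>b\<in>S. Wn a b) \<le> (\<Sum>b\<in>B. Wn a b)" by (rule sum_mono2[OF fB that(1)]) (simp add: Wnn)
    thus ?thesis using Ws[OF that(2)] by simp
  qed
  have inj: "inj_on x {1..M}"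
  proof (rule inj_onI, rule ccontr)
    fix j k assume jk: "j \<in> {1..M}" "k \<in> {1..M}" "x j = x k" "j \<noteq> k"
    have "(\<Sum>b\<in>Bs j \<union> Bs k. Wn (x j) b) = (\<Sum>b\<in>Bs j. Wn (x j) b) + (\<Sum>b\<in>Bs k. Wn (x k) b)"
    proof -
      have "Bs j \<inter> Bs k = {}" using disj jk by blast
      thus ?thesis using sum.union_disjoint[OF fin[OF jk(1)] fin[OF jk(2)], of "Wn (x j)"] jk(3) by simp
    qed
    also have "\<dots> \<ge> 2 - 2 * e" using vS[OF jk(1)] vS[OF jk(2)] by simp
    finally have "(\<Sum>b\<in>Bs j \<union> Bs k. Wn (x j) b) \<ge> 2 - 2*e" .
    moreover have "(\<Sum>b\<in>Bs j \<union> Bs k. Wn (x j) b) \<le> 1"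
      using vB[OF jk(1)] vB[OF jk(2)] vA[OF jk(1)] by (intro le1) auto
    ultimately show False using e by simp
  qed
  have key: "PY b \<le> Wn (x j) b / c" if "j \<in> {1..M}" "b \<in> Bs j" for j b
    using vD[OF that(1)] that(2) c by (auto simp: D_def field_simps)
  have "(\<Sum>b\<in>U. PY b) = (\<Sum>j\<in>{1..M}. \<Sum>b\<in>Bs j. PY b)"
    unfolding U_def by (rule sum.UNION_disjoint) (use fin disj in auto)
  also have "\<dots> \<le> (\<Sum>j\<in>{1..M}. \<Sum>b\<in>Bs j. Wn (x j) b / c)"
    by (intro sum_mono key) auto
  also have "\<dots> \<le> (\<Sum>j\<in>{1..M}. 1 / c)"
    unfolding sum_divide_distrib[symmetric] using c vB vA
    by (intro sum_mono divide_right_mono le1) auto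
  also have "\<dots> = real M / c" by simp
  finally have PYU: "(\<Sum>b\<in>U. PY b) \<le> real M / c" .
  have per_a: "(\<Sum>b\<in>B. if Wn a b > c * PY b then Wn a b else 0) \<le> (\<Sum>b\<in>U. Wn a b) + (1 - e)" if "a \<in> A" for a
  proof -
    have "(\<Sum>b\<in>B. if Wn a b > c * PY b then Wn a b else 0) = (\<Sum>b\<in>D a. Wn a b)"
      unfolding D_def using fB by (simp add: sum.If_cases Int_def conj_commute)
    also have "\<dots> = (\<Sum>b\<in>D a \<inter> U. Wn a b) + (\<Sum>b\<in>D a - U. Wn a b)"
      using fB DB by (metis finite_subset sum.Int_Diff)
    also have "\<dots> \<le> (\<Sum>b\<in>U. Wn a b) + (1 - e)"
      using maxi[OF that] UB fB by (intro add_mono sum_mono2) (auto simp: Wnn intro: finite_subset)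
    finally show ?thesis .
  qed
  have "1 - (\<Sum>a\<in>A. \<Sum>b\<in>B. if Wn a b > c * PY b then 0 else Qn a * Wn a b)
      = (\<Sum>a\<in>A. Qn a * (\<Sum>b\<in>B. if Wn a b > c * PY b then Wn a b else 0))"
  proof -
    have "(\<Sum>a\<in>A. Qn a * (\<Sum>b\<in>B. if Wn a b > c * PY b then Wn a b else 0))
        + (\<Sum>a\<in>A. \<Sum>b\<in>B. if Wn a b > c * PY b then 0 else Qn a * Wn a b)
        = (\<Sum>a\<in>A. Qn a * (\<Sum>b\<in>B. Wn a b))"
      unfolding sum.distrib[symmetric] sum_distrib_left by (intro sum.cong refl) simp
    also have "\<dots> = 1" using Ws Qs by simp
    finally show ?thesis by linarith
  qed
  also have "\<dots> \<le> (\<Sum>a\<in>A. Qn a * ((\<Sum>b\<in>U. Wn a b) + (1 - e)))"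
    by (intro sum_mono mult_left_mono per_a Qnn)
  also have "\<dots> = (\<Sum>b\<in>U. PY b) + (1 - e)"
  proof -
    have "(\<Sum>a\<in>A. Qn a * ((\<Sum>b\<in>U. Wn a b) + (1 - e))) = (\<Sum>a\<in>A. \<Sum>b\<in>U. Qn a * Wn a b) + (1-e) * (\<Sum>a\<in>A. Qn a)"
      by (simp add: distrib_left sum.distrib sum_distrib_left sum_distrib_right mult.commute)
    also have "(\<Sum>a\<in>A. \<Sum>b\<in>U. Qn a * Wn a b) = (\<Sum>b\<in>U. PY b)"
      unfolding PY_def by (rule sum.swap)
    finally show ?thesis using Qs by simp
  qed
  finally have "e - (\<Sum>a\<in>A. \<Sum>b\<in>B. if Wn a b > c * PY b then 0 else Qn a * Wn a b) \<le> real M / c"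
    using PYU by linarith
  moreover have "\<forall>j\<in>{1..M}. x j \<in> A \<and> Bs j \<subseteq> B \<and> (\<Sum>b\<in>Bs j. Wn (x j) b) \<ge> 1 - e"
    using vA vB vS by blast
  ultimately show ?thesis using disj inj unfolding PY_def by blast
qed

lemma pw_split: "pw (\<lambda>x y. q x * W x y) xs ys = pl q xs * pw W xs ys"
  by (induction "\<lambda>x y. q x * W x y" xs ys rule: pw.induct) auto

lemma sum_pl:
  fixes q :: "'a::finite \<Rightarrow> real"
  assumes "(\<Sum>x\<in>UNIV. q x) = 1"
  shows "(\<Sum>xs\<in>Ln n. pl q xs) = 1"
proof (induction n)
  case (Suc n) thus ?case using assms by (simp add: sum_Ln_Suc sum_distrib_left[symmetric] sum_distrib_right[symmetric])
qed simp

lemma sum_pwW: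
  fixes W :: "'a \<Rightarrow> 'b::finite \<Rightarrow> real"
  assumes "\<And>x. (\<Sum>y\<in>UNIV. W x y) = 1"
  shows "(\<Sum>ys\<in>Ln (length xs). pw W xs ys) = 1"
proof (induction xs)
  case (Cons x xs) thus ?case using assms by (simp add: sum_Ln_Suc sum_distrib_left[symmetric] sum_distrib_right[symmetric])
qed simp

lemma sum_PYn:
  fixes q :: "'a::finite \<Rightarrow> real" and W :: "'a \<Rightarrow> 'b \<Rightarrow> real"
  shows "(\<Sum>xs\<in>Ln (length ys). pl q xs * pw W xs ys) = pl (\<lambda>y. \<Sum>x\<in>UNIV. q x * W x y) ys"
proof (induction ys)
  case (Cons y ys)
  have "(\<Sum>xs\<in>Ln (length (y#ys)). pl q xs * pw W xs (y#ys))
      = (\<Sum>x\<in>UNIV. q x * W x y * (\<Sum>xs\<in>Ln (length ys). pl q xs * pw W xs ys))"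
    by (simp add: sum_Ln_Suc sum_distrib_left algebra_simps)
  also have "\<dots> = pl (\<lambda>y. \<Sum>x\<in>UNIV. q x * W x y) (y#ys)"
    using Cons by (simp add: sum_distrib_right[symmetric])
  finally show ?case .
qed simp

lemma ts_log:
  fixes q :: "'a::finite \<Rightarrow> real" and W :: "'a \<Rightarrow> 'b \<Rightarrow> real"
  assumes qn: "\<And>x. q x \<ge> 0" and Wn: "\<And>x y. W x y \<ge> 0"
  shows "pw (\<lambda>x y. q x * W x y) xs ys > 0 \<Longrightarrow>
     pw W xs ys > 0 \<and> pl (\<lambda>y. \<Sum>x\<in>UNIV. q x * W x y) ys > 0 \<and>
     ts (\<lambda>x y. log 2 (W x y / (\<Sum>x'\<in>UNIV. q x' * W x' y))) xs ys
       = log 2 (pw W xs ys) - log 2 (pl (\<lambda>y. \<Sum>x\<in>UNIV. q x * W x y) ys)"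
proof (induction "\<lambda>x y. q x * W x y" xs ys rule: pw.induct)
  case (2 x xs y ys)
  define PY where "PY y = (\<Sum>x\<in>UNIV. q x * W x y)" for y
  have r0: "pw (\<lambda>x y. q x * W x y) xs ys \<ge> 0" by (rule pw_nonneg) (simp add: qn Wn)
  have "q x * W x y \<ge> 0" by (simp add: qn Wn)
  hence pos: "q x * W x y > 0" "pw (\<lambda>x y. q x * W x y) xs ys > 0"
    using 2(2) r0 by (auto simp: zero_less_mult_iff)
  hence Wp: "W x y > 0" using qn[of x] Wn[of x y] by (auto simp: zero_less_mult_iff)
  have "q x * W x y \<le> PY y" unfolding PY_def
    by (rule member_le_sum) (auto simp: qn Wn)
  hence PYp: "PY y > 0" using pos by simp
  note IH = 2(1)[OF pos(2)]
  show ?case using IH Wp PYp unfolding PY_def[symmetric]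
    by (simp add: log_mult_pos log_divide_pos)
qed auto

lemma ts_shift: "length xs = length ys \<Longrightarrow> ts (\<lambda>x y. f x y - m) xs ys = ts f xs ys - real (length xs) * m"
  by (induction f xs ys rule: ts.induct) (auto simp: algebra_simps)

lemma code_exists:
  fixes q :: "'x::finite \<Rightarrow> real" and W :: "'x \<Rightarrow> 'y::finite \<Rightarrow> real"
  assumes qn: "\<And>x. q x \<ge> 0" and qs: "(\<Sum>x\<in>UNIV. q x) = 1"
    and Wn: "\<And>x y. W x y \<ge> 0" and Ws: "\<And>x. (\<Sum>y\<in>UNIV. W x y) = 1"
    and R: "Rc < mutual_info q W" and e: "0 < e" "e \<le> 1/3"
  shows "\<exists>N. \<forall>n\<ge>N. \<exists>M x Bs. n \<ge> 1 \<and> M \<ge> 1 \<and> Rc \<le> log 2 (real M) / real n \<and>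
     (\<forall>j\<in>{1..M}. x j \<in> Ln n \<and> Bs j \<subseteq> Ln n \<and> (\<Sum>b\<in>Bs j. pw W (x j) b) \<ge> 1 - e)
     \<and> (\<forall>j\<in>{1..M}. \<forall>k\<in>{1..M}. j \<noteq> k \<longrightarrow> Bs j \<inter> Bs k = {}) \<and> inj_on x {1..(M::nat)}"
proof -
  define PY where "PY y = (\<Sum>x\<in>UNIV. q x * W x y)" for y
  define r where "r x y = q x * W x y" for x y
  define f where "f x y = log 2 (W x y / PY y)" for x y
  define mu where "mu = mutual_info q W"
  define g where "g x y = f x y - mu" for x y
  define \<delta> where "\<delta> = (mu - Rc) / 2"
  define V where "V = (\<Sum>x\<in>UNIV. \<Sum>y\<in>UNIV. r x y * (g x y)^2)"
  have dp: "\<delta> > 0" using R by (simp add: \<delta>_def mu_def)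
  have rn: "r x y \<ge> 0" for x y by (simp add: r_def qn Wn)
  have Vn: "V \<ge> 0" unfolding V_def by (intro sum_nonneg) (simp add: rn)
  have rs: "(\<Sum>x\<in>UNIV. \<Sum>y\<in>UNIV. r x y) = 1"
    using qs Ws by (simp add: r_def sum_distrib_left[symmetric])
  have mu_eq: "(\<Sum>x\<in>UNIV. \<Sum>y\<in>UNIV. r x y * f x y) = mu"
    by (simp add: mu_def mutual_info_def r_def f_def PY_def)
  have rg: "(\<Sum>x\<in>UNIV. \<Sum>y\<in>UNIV. r x y * g x y) = 0"
  proof -
    have "(\<Sum>x\<in>UNIV. \<Sum>y\<in>UNIV. r x y * g x y) = (\<Sum>x\<in>UNIV. \<Sum>y\<in>UNIV. r x y * f x y) - mu * (\<Sum>x\<in>UNIV. \<Sum>y\<in>UNIV. r x y)"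
      by (simp add: g_def algebra_simps sum_subtractf sum_distrib_left)
    thus ?thesis using mu_eq rs by simp
  qed
  define N where "N = nat \<lceil>max (2 * V / (\<delta>^2 * e)) (- log 2 (e/2) / \<delta>)\<rceil> + 1"
  have "\<exists>M x Bs. n \<ge> 1 \<and> M \<ge> 1 \<and> Rc \<le> log 2 (real M) / real n \<and>
     (\<forall>j\<in>{1..M}. x j \<in> Ln n \<and> Bs j \<subseteq> Ln n \<and> (\<Sum>b\<in>Bs j. pw W (x j) b) \<ge> 1 - e)
     \<and> (\<forall>j\<in>{1..M}. \<forall>k\<in>{1..M}. j \<noteq> k \<longrightarrow> Bs j \<inter> Bs k = {}) \<and> inj_on x {1..(M::nat)}"
    if nN: "n \<ge> N" for n
  proof -
    have n1: "n \<ge> 1" using nN by (simp add: N_def)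
    have npos: "real n > 0" using n1 by simp
    have nge1: "real n \<ge> 2 * V / (\<delta>^2 * e)" and nge2: "real n \<ge> - log 2 (e/2) / \<delta>"
      using nN unfolding N_def by linarith+
    define c where "c = 2 powr (real n * (mu - \<delta>))"
    have cp: "c > 0" by (simp add: c_def)
    obtain M x Bs where
      fe1: "\<forall>j\<in>{1..M}. x j \<in> Ln n \<and> Bs j \<subseteq> Ln n \<and> (\<Sum>b\<in>Bs j. pw W (x j) b) \<ge> 1 - e"
      and fe2: "\<forall>j\<in>{1..M}. \<forall>k\<in>{1..M}. j \<noteq> k \<longrightarrow> Bs j \<inter> Bs k = {}" and fe3: "inj_on x {1..(M::nat)}"
      and fe4: "e - (\<Sum>a\<in>Ln n. \<Sum>b\<in>Ln n. if pw W a b > c * (\<Sum>a'\<in>Ln n. pl q a' * pw W a' b) then 0 else pl q a * pw W a b) \<le> real M / c"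
    proof -
      have Wsn: "(\<Sum>b\<in>Ln n. pw W a b) = 1" if "a \<in> Ln n" for a
        using sum_pwW[OF Ws, where xs=a] that by simp
      show ?thesis
        using feinstein[of "Ln n" "Ln n" "pl q" "pw W" c e, OF finite_Ln finite_Ln pl_nonneg[OF qn] sum_pl[OF qs]
          pw_nonneg[OF Wn] Wsn cp e] that by blast
    qed
    have termb: "(if pw W a b > c * (\<Sum>a'\<in>Ln n. pl q a' * pw W a' b) then 0 else pl q a * pw W a b)
        \<le> pw r a b * (ts g a b)^2 / (real n * \<delta>)^2" if a: "a \<in> Ln n" and b: "b \<in> Ln n" for a b
    proof -
      have pr: "pw r a b = pl q a * pw W a b" unfolding r_def by (rule pw_split)
      have prn: "pw r a b \<ge> 0" by (rule pw_nonneg) (rule rn)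
      show ?thesis
      proof (cases "pw r a b > 0 \<and> \<not> pw W a b > c * (\<Sum>a'\<in>Ln n. pl q a' * pw W a' b)")
        case False
        thus ?thesis using prn pr by (auto intro!: divide_nonneg_nonneg)
      next
        case True
        have PYn: "(\<Sum>a'\<in>Ln n. pl q a' * pw W a' b) = pl PY b"
          using sum_PYn[of q W b] b unfolding PY_def by simp
        from ts_log[OF qn Wn, where xs=a and ys=b] True
        have tl: "pw W a b > 0" "pl PY b > 0" "ts f a b = log 2 (pw W a b) - log 2 (pl PY b)"
          unfolding r_def f_def PY_def by auto
        have le: "pw W a b \<le> c * pl PY b" using True PYn by simp
        have "log 2 (pw W a b) \<le> log 2 (c * pl PY b)"
          using le tl cp by (subst log_le_cancel_iff) auto
        also have "\<dots> = real n * (mu - \<delta>) + log 2 (pl PY b)"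
          using cp tl by (simp add: log_mult_pos c_def)
        finally have "ts f a b \<le> real n * (mu - \<delta>)" using tl by simp
        moreover have "ts g a b = ts f a b - real n * mu"
          unfolding g_def using ts_shift[of a b f mu] a b by simp
        ultimately have "ts g a b \<le> - (real n * \<delta>)" by (simp add: algebra_simps)
        moreover have "real n * \<delta> > 0" using npos dp by simp
        ultimately have "(real n * \<delta>)^2 \<le> (- ts g a b)^2"
          by (intro power_mono) auto
        hence "(real n * \<delta>)^2 \<le> (ts g a b)^2" by simp
        hence "1 \<le> (ts g a b)^2 / (real n * \<delta>)^2" using npos dp by (simp add: le_divide_eq)
        hence "pw r a b * 1 \<le> pw r a b * ((ts g a b)^2 / (real n * \<delta>)^2)"
          using prn by (intro mult_left_mono) auto
        thus ?thesis using True pr by simp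
      qed
    qed
    have "(\<Sum>a\<in>Ln n. \<Sum>b\<in>Ln n. if pw W a b > c * (\<Sum>a'\<in>Ln n. pl q a' * pw W a' b) then 0 else pl q a * pw W a b)
        \<le> (\<Sum>a\<in>Ln n. \<Sum>b\<in>Ln n. pw r a b * (ts g a b)^2 / (real n * \<delta>)^2)"
      by (intro sum_mono termb) auto
    also have "\<dots> = (\<Sum>a\<in>Ln n. \<Sum>b\<in>Ln n. pw r a b * (ts g a b)^2) / (real n * \<delta>)^2"
      by (simp add: sum_divide_distrib)
    also have "\<dots> = real n * V / (real n * \<delta>)^2"
      using sum_pw_ts2[OF rs rg, of n] unfolding V_def by simp
    also have "\<dots> = V / (real n * \<delta>^2)" using npos by (simp add: power2_eq_square)
    also have "\<dots> \<le> e / 2"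
    proof -
      have "2 * V / (\<delta>^2 * e) * (\<delta>^2 * e) \<le> real n * (\<delta>^2 * e)"
        using nge1 dp e by (intro mult_right_mono) auto
      hence "2 * V \<le> real n * (\<delta>^2 * e)" using dp e by simp
      thus ?thesis using npos dp by (simp add: field_simps)
    qed
    finally have Perr: "(\<Sum>a\<in>Ln n. \<Sum>b\<in>Ln n. if pw W a b > c * (\<Sum>a'\<in>Ln n. pl q a' * pw W a' b) then 0 else pl q a * pw W a b) \<le> e / 2" .
    have "e / 2 \<le> real M / c" using fe4 Perr by linarith
    hence Mc: "real M \<ge> c * (e/2)" using cp by (simp add: pos_le_divide_eq mult.commute)
    have "c * (e/2) > 0" using cp e by simp
    hence Mpos: "real M > 0" using Mc by linarith
    hence M1: "M \<ge> 1" by simp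
    have "log 2 (real M) \<ge> log 2 (c * (e/2))"
      using Mc cp e Mpos by (subst log_le_cancel_iff) auto
    also have "log 2 (c * (e/2)) = log 2 c + log 2 (e/2)"
      by (rule log_mult_pos) (use cp e in auto)
    also have "log 2 c = real n * (mu - \<delta>)" by (simp add: c_def)
    finally have "log 2 (real M) \<ge> real n * (mu - \<delta>) + log 2 (e/2)" .
    moreover have "real n * \<delta> \<ge> - log 2 (e/2)" using nge2 dp by (simp add: field_simps)
    moreover have "mu - \<delta> = Rc + \<delta>" by (simp add: \<delta>_def field_simps)
    ultimately have "log 2 (real M) \<ge> real n * Rc" by (simp add: algebra_simps)
    hence "Rc \<le> log 2 (real M) / real n" using npos by (simp add: field_simps)
    thus ?thesis using n1 M1 fe1 fe2 fe3 by blast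
  qed
  thus ?thesis by blast
qed

lemma prod_pw: "length ys = length xs \<Longrightarrow> (\<Prod>i<length xs. W (xs!i) (ys!i)) = pw W xs ys"
proof (induction xs arbitrary: ys)
  case (Cons x xs)
  then obtain y ys' where ys: "ys = y # ys'" by (cases ys) auto
  have "(\<Prod>i<length (x#xs). W ((x#xs)!i) (ys!i)) = W x y * (\<Prod>i<length xs. W (xs!i) (ys'!i))"
    unfolding ys length_Cons prod.lessThan_Suc_shift by simp
  thus ?case using Cons ys by simp
qed simp

lemma H_rv_sets:
  assumes "represents H P" "H_rv H Z"
  shows "{\<omega>. Z \<omega> = a} \<in> sets (P \<theta>)"
proof -
  have s: "sets (P \<theta>) = sets (sigmaH H)" using assms(1) by (simp add: represents_def)
  have "(indicator {\<omega>. Z \<omega> = a} :: _ \<Rightarrow> real) \<in> H" using assms(2) by (simp add: H_rv_def)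
  moreover have "{\<omega>. Z \<omega> = a} = (indicator {\<omega>. Z \<omega> = a} :: _ \<Rightarrow> real) -` {1}"
    by (auto simp: indicator_def)
  ultimately have "\<exists>X B. {\<omega>. Z \<omega> = a} = X -` B \<and> X \<in> H \<and> B \<in> sets borel"
    by (intro exI[of _ "indicator {\<omega>. Z \<omega> = a} :: _ \<Rightarrow> real"] exI[of _ "{1::real}"]) simp
  hence "{\<omega>. Z \<omega> = a} \<in> {X -` B | X B. X \<in> H \<and> B \<in> sets borel}" by (simp only: mem_Collect_eq)
  hence "{\<omega>. Z \<omega> = a} \<in> sigma_sets UNIV {X -` B | X B. X \<in> H \<and> B \<in> sets borel}"
    by (rule sigma_sets.Basic)
  moreover have "sets (sigmaH H) = sigma_sets UNIV {X -` B | X B. X \<in> H \<and> B \<in> sets borel}"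
    unfolding sigmaH_def by (rule sets_measure_of) simp
  ultimately show ?thesis using s by simp
qed

lemma finite_Ln_filter[simp]: "finite {ys :: 'a::finite list. length ys = n \<and> Q ys}"
  by (rule finite_subset[OF _ finite_Ln[of n]]) auto

lemma error_bound:
  fixes S :: "'w \<Rightarrow> nat" and Y :: "'w \<Rightarrow> 'y::finite list" and x :: "nat \<Rightarrow> 'x::finite list"
  assumes rep: "represents H P" and hS: "H_rv H S" and hY: "H_rv H Y"
    and Sr: "\<forall>\<omega>. S \<omega> \<in> {1..M}" and Yl: "\<forall>\<omega>. length (Y \<omega>) = n"
    and inj: "inj_on x {1..M}"
    and code: "\<forall>j\<in>{1..M}. x j \<in> Ln n \<and> Bs j \<subseteq> Ln n \<and> (\<Sum>b\<in>Bs j. pw W (x j) b) \<ge> 1 - e"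
    and dec: "\<forall>s\<in>{1..M}. \<forall>ys\<in>Ln n. (\<psi> ys \<noteq> s \<longrightarrow> ys \<notin> Bs s)"
    and km: "kernel_match P p n (\<lambda>\<omega>. x (S \<omega>)) Y \<theta> l" and Wd: "W = p l"
    and e: "e \<ge> 0" and Ws: "\<And>x. (\<Sum>y\<in>UNIV. W x y) = 1"
    and Wn: "\<And>x y. W x y \<ge> 0"
  shows "measure (P \<theta>) {\<omega>. \<psi> (Y \<omega>) \<noteq> S \<omega>} \<le> e"
proof -
  interpret prob_space "P \<theta>" using rep by (simp add: represents_def)
  have mS: "{\<omega>. S \<omega> = s} \<in> sets (P \<theta>)" for s using H_rv_sets[OF rep hS] .
  have mY: "{\<omega>. Y \<omega> = ys} \<in> sets (P \<theta>)" for ys using H_rv_sets[OF rep hY] .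
  define I where "I = Sigma {1..M} (\<lambda>s. {ys\<in>Ln n. \<psi> ys \<noteq> s})"
  define A where "A = (\<lambda>(s,ys). {\<omega>. S \<omega> = s \<and> Y \<omega> = ys})"
  have fI: "finite I" unfolding I_def using finite_Ln by (intro finite_SigmaI) (auto intro: finite_subset[OF _ finite_Ln])
  have AI: "A ` I \<subseteq> sets (P \<theta>)"
  proof
    fix B assume "B \<in> A ` I"
    then obtain s ys where "B = {\<omega>. S \<omega> = s} \<inter> {\<omega>. Y \<omega> = ys}" by (auto simp: A_def)
    thus "B \<in> sets (P \<theta>)" using mS mY by auto
  qed
  have dA: "disjoint_family_on A I" by (auto simp: disjoint_family_on_def A_def)
  have Eeq: "{\<omega>. \<psi> (Y \<omega>) \<noteq> S \<omega>} = (\<Union>i\<in>I. A i)"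
  proof safe
    fix \<omega> assume "\<psi> (Y \<omega>) \<noteq> S \<omega>"
    hence "(S \<omega>, Y \<omega>) \<in> I" using Sr Yl by (auto simp: I_def)
    thus "\<omega> \<in> (\<Union>i\<in>I. A i)" by (auto simp: A_def)
  next
    fix \<omega> i assume "i \<in> I" "\<omega> \<in> A i" "\<psi> (Y \<omega>) = S \<omega>"
    thus False by (auto simp: I_def A_def)
  qed
  have cell: "measure (P \<theta>) (A (s, ys)) = measure (P \<theta>) {\<omega>. S \<omega> = s} * pw W (x s) ys"
    if "(s, ys) \<in> I" for s ys
  proof -
    have s: "s \<in> {1..M}" and ys: "length ys = n" using that by (auto simp: I_def)
    have xs: "length (x s) = n" using code s by auto
    have eq1: "{\<omega>. x (S \<omega>) = x s} = {\<omega>. S \<omega> = s}"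
      using inj s Sr by (auto dest: inj_onD)
    have "A (s, ys) = {\<omega>. x (S \<omega>) = x s \<and> Y \<omega> = ys}"
      using inj s Sr by (auto simp: A_def dest: inj_onD)
    hence "measure (P \<theta>) (A (s, ys)) = measure (P \<theta>) {\<omega>. x (S \<omega>) = x s} * (\<Prod>i<n. p l (x s ! i) (ys ! i))"
      using km xs ys by (simp add: kernel_match_def)
    also have "(\<Prod>i<n. p l (x s ! i) (ys ! i)) = pw W (x s) ys"
      using prod_pw[of ys "x s" "p l"] xs ys Wd by simp
    finally show ?thesis using eq1 by simp
  qed
  have "measure (P \<theta>) {\<omega>. \<psi> (Y \<omega>) \<noteq> S \<omega>} = (\<Sum>i\<in>I. measure (P \<theta>) (A i))"
    unfolding Eeq by (rule finite_measure_finite_Union[OF fI AI dA])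
  also have "\<dots> = (\<Sum>s\<in>{1..M}. \<Sum>ys\<in>{ys\<in>Ln n. \<psi> ys \<noteq> s}. measure (P \<theta>) (A (s, ys)))"
    unfolding I_def by (subst sum.Sigma) (use finite_Ln in auto)
  also have "\<dots> = (\<Sum>s\<in>{1..M}. measure (P \<theta>) {\<omega>. S \<omega> = s} * (\<Sum>ys\<in>{ys\<in>Ln n. \<psi> ys \<noteq> s}. pw W (x s) ys))"
    unfolding sum_distrib_left by (intro sum.cong refl cell) (auto simp: I_def)
  also have "\<dots> \<le> (\<Sum>s\<in>{1..M}. measure (P \<theta>) {\<omega>. S \<omega> = s} * e)"
  proof (intro sum_mono mult_left_mono)
    fix s assume s: "s \<in> {1..M}"
    have sub: "Bs s \<subseteq> Ln n" and ge: "(\<Sum>b\<in>Bs s. pw W (x s) b) \<ge> 1 - e" and xs: "length (x s) = n"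
      using code s by auto
    have "(\<Sum>ys\<in>{ys\<in>Ln n. \<psi> ys \<noteq> s}. pw W (x s) ys) \<le> (\<Sum>ys\<in>Ln n - Bs s. pw W (x s) ys)"
      using dec s finite_Ln by (intro sum_mono2) (auto intro: pw_nonneg Wn)
    also have "(\<Sum>ys\<in>Ln n - Bs s. pw W (x s) ys) = (\<Sum>ys\<in>Ln n. pw W (x s) ys) - (\<Sum>b\<in>Bs s. pw W (x s) b)"
      using sub finite_Ln by (subst sum_diff) auto
    also have "(\<Sum>ys\<in>Ln n. pw W (x s) ys) = 1"
      using sum_pwW[OF Ws, where xs="x s"] xs by simp
    finally show "(\<Sum>ys\<in>{ys\<in>Ln n. \<psi> ys \<noteq> s}. pw W (x s) ys) \<le> e" using ge by simp
  qed simp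
  also have "\<dots> = e * measure (P \<theta>) (\<Union>s\<in>{1..M}. {\<omega>. S \<omega> = s})"
    by (subst finite_measure_finite_Union) (use mS in \<open>auto simp: disjoint_family_on_def sum_distrib_left mult.commute\<close>)
  also have "\<dots> \<le> e * 1" using e by (intro mult_left_mono) auto
  finally show ?thesis by simp
qed

theorem theorem12:
  fixes H :: "('w \<Rightarrow> real) set"
    and P :: "'t \<Rightarrow> 'w measure"
    and p :: "'l \<Rightarrow> 'x::finite \<Rightarrow> 'y::finite \<Rightarrow> real"
    and Rc \<epsilon> :: real
  assumes "sle_space H"
    and "represents H P"
    and "cd_weakly_compact H P"
    and "stochastic p"
    and "Rc < upper_capacity p"
    and "\<epsilon> > 0"
  shows "\<exists>N. \<forall>n\<ge>N. \<exists>(M::nat) (\<phi>::nat \<Rightarrow> 'x list) (\<psi>::'y list \<Rightarrow> nat).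
           n \<ge> 1 \<and> M \<ge> 1 \<and> Rc \<le> log 2 (real M) / real n \<and>
           (\<forall>s\<in>{1..M}. length (\<phi> s) = n) \<and>
           (\<forall>ys. length ys = n \<longrightarrow> \<psi> ys \<in> {1..M}) \<and>
           (\<forall>(S::'w \<Rightarrow> nat) (Y::'w \<Rightarrow> 'y list).
              H_rv H S \<and> H_rv H Y \<and> (\<forall>\<omega>. S \<omega> \<in> {1..M}) \<and> (\<forall>\<omega>. length (Y \<omega>) = n) \<and>
              memoryless P p n (\<lambda>\<omega>. \<phi> (S \<omega>)) Y
              \<longrightarrow> lower_E P (indicator {\<omega>. \<psi> (Y \<omega>) \<noteq> S \<omega>})
                    = (INF \<theta>. measure (P \<theta>) {\<omega>. \<psi> (Y \<omega>) \<noteq> S \<omega>})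
                  \<and> (INF \<theta>. measure (P \<theta>) {\<omega>. \<psi> (Y \<omega>) \<noteq> S \<omega>}) < \<epsilon>)"
proof -
  note rep = assms(2)
  have pn: "\<And>l x y. p l x y \<ge> 0" and ps: "\<And>l x. (\<Sum>y\<in>UNIV. p l x y) = 1"
    using assms(4) by (auto simp: stochastic_def)
  define q0 where "q0 = (\<lambda>x::'x. 1 / real (card (UNIV::'x set)))"
  have "is_distr q0" by (simp add: is_distr_def q0_def)
  hence ne: "{mutual_info q (p l) | q l. is_distr q} \<noteq> {}" by blast
  obtain q l where qd: "is_distr q" and R: "Rc < mutual_info q (p l)"
    using less_cSupE[OF assms(5)[unfolded upper_capacity_def] ne] by blast
  have qn: "\<And>x. q x \<ge> 0" and qs: "(\<Sum>x\<in>UNIV. q x) = 1" using qd by (auto simp: is_distr_def)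
  define e where "e = min (\<epsilon>/2) (1/3)"
  have e: "0 < e" "e \<le> 1/3" "e < \<epsilon>" using assms(6) by (auto simp: e_def)
  obtain N where N: "\<forall>n\<ge>N. \<exists>M x Bs. n \<ge> 1 \<and> M \<ge> 1 \<and> Rc \<le> log 2 (real M) / real n \<and>
     (\<forall>j\<in>{1..M}. x j \<in> Ln n \<and> Bs j \<subseteq> Ln n \<and> (\<Sum>b\<in>Bs j. pw (p l) (x j) b) \<ge> 1 - e)
     \<and> (\<forall>j\<in>{1..M}. \<forall>k\<in>{1..M}. j \<noteq> k \<longrightarrow> Bs j \<inter> Bs k = {}) \<and> inj_on x {1..(M::nat)}"
    using code_exists[OF qn qs pn ps R e(1,2)] by (elim exE) (rule that)
  show ?thesis
  proof (rule exI[of _ N], intro allI impI)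
    fix n assume "n \<ge> N"
    then obtain M x Bs where n1: "n \<ge> 1" and M1: "M \<ge> 1" and rate: "Rc \<le> log 2 (real M) / real n"
      and code: "\<forall>j\<in>{1..M}. x j \<in> Ln n \<and> Bs j \<subseteq> Ln n \<and> (\<Sum>b\<in>Bs j. pw (p l) (x j) b) \<ge> 1 - e"
      and disj: "\<forall>j\<in>{1..M}. \<forall>k\<in>{1..M}. j \<noteq> k \<longrightarrow> Bs j \<inter> Bs k = {}" and inj: "inj_on x {1..(M::nat)}"
      using N[rule_format, OF \<open>n \<ge> N\<close>] by (elim exE conjE) (rule that; assumption)
    define \<psi> where "\<psi> ys = (if \<exists>j\<in>{1..M}. ys \<in> Bs j then SOME j. j \<in> {1..M} \<and> ys \<in> Bs j else 1)" for ys
    have \<psi>r: "\<psi> ys \<in> {1..M}" for ys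
    proof (cases "\<exists>j\<in>{1..M}. ys \<in> Bs j")
      case True
      hence "\<exists>j. j \<in> {1..M} \<and> ys \<in> Bs j" by blast
      from someI_ex[OF this] show ?thesis using True by (simp add: \<psi>_def)
    qed (use M1 in \<open>simp add: \<psi>_def\<close>)
    have dec: "\<forall>s\<in>{1..M}. \<forall>ys\<in>Ln n. (\<psi> ys \<noteq> s \<longrightarrow> ys \<notin> Bs s)"
    proof (intro ballI impI)
      fix s and ys :: "'y list" assume s: "s \<in> {1..M}" and "ys \<in> Ln n" and ne: "\<psi> ys \<noteq> s"
      show "ys \<notin> Bs s"
      proof
        assume yb: "ys \<in> Bs s"
        hence ex: "\<exists>j. j \<in> {1..M} \<and> ys \<in> Bs j" using s by blast
        hence "\<exists>j\<in>{1..M}. ys \<in> Bs j" by blast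
        hence sp: "\<psi> ys \<in> {1..M} \<and> ys \<in> Bs (\<psi> ys)" using someI_ex[OF ex] by (simp add: \<psi>_def)
        thus False using disj s yb ne by blast
      qed
    qed
    show "\<exists>(M::nat) (\<phi>::nat \<Rightarrow> 'x list) (\<psi>::'y list \<Rightarrow> nat).
           n \<ge> 1 \<and> M \<ge> 1 \<and> Rc \<le> log 2 (real M) / real n \<and>
           (\<forall>s\<in>{1..M}. length (\<phi> s) = n) \<and>
           (\<forall>ys. length ys = n \<longrightarrow> \<psi> ys \<in> {1..M}) \<and>
           (\<forall>(S::'w \<Rightarrow> nat) (Y::'w \<Rightarrow> 'y list).
              H_rv H S \<and> H_rv H Y \<and> (\<forall>\<omega>. S \<omega> \<in> {1..M}) \<and> (\<forall>\<omega>. length (Y \<omega>) = n) \<and>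
              memoryless P p n (\<lambda>\<omega>. \<phi> (S \<omega>)) Y
              \<longrightarrow> lower_E P (indicator {\<omega>. \<psi> (Y \<omega>) \<noteq> S \<omega>})
                    = (INF \<theta>. measure (P \<theta>) {\<omega>. \<psi> (Y \<omega>) \<noteq> S \<omega>})
                  \<and> (INF \<theta>. measure (P \<theta>) {\<omega>. \<psi> (Y \<omega>) \<noteq> S \<omega>}) < \<epsilon>)"
    proof (rule exI[of _ M], rule exI[of _ x], rule exI[of _ \<psi>], intro conjI allI impI)
      show "n \<ge> 1" "M \<ge> 1" "Rc \<le> log 2 (real M) / real n" by fact+
      show "\<forall>s\<in>{1..M}. length (x s) = n" using code by auto
      show "\<And>ys. length ys = n \<Longrightarrow> \<psi> ys \<in> {1..M}" using \<psi>r by blast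
    next
      fix S :: "'w \<Rightarrow> nat" and Y :: "'w \<Rightarrow> 'y list"
      assume h: "H_rv H S \<and> H_rv H Y \<and> (\<forall>\<omega>. S \<omega> \<in> {1..M}) \<and> (\<forall>\<omega>. length (Y \<omega>) = n) \<and>
              memoryless P p n (\<lambda>\<omega>. x (S \<omega>)) Y"
      define E where "E = {\<omega>. \<psi> (Y \<omega>) \<noteq> S \<omega>}"
      have sp: "space (P \<theta>) = UNIV" for \<theta> using rep by (simp add: represents_def)
      have "lower_E P (indicator E) = - (SUP \<theta>. - measure (P \<theta>) E)"
        unfolding lower_E_def upper_E_def using sp by simp
      also have "\<dots> = (INF \<theta>. measure (P \<theta>) E)"
        by (simp add: Inf_real_def image_image)
      finally show "lower_E P (indicator {\<omega>. \<psi> (Y \<omega>) \<noteq> S \<omega>}) = (INF \<theta>. measure (P \<theta>) {\<omega>. \<psi> (Y \<omega>) \<noteq> S \<omega>})"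
        unfolding E_def .
      obtain \<theta> where km: "kernel_match P p n (\<lambda>\<omega>. x (S \<omega>)) Y \<theta> l"
      proof -
        have "\<forall>l. \<exists>\<theta>. kernel_match P p n (\<lambda>\<omega>. x (S \<omega>)) Y \<theta> l" using h by (simp add: memoryless_def)
        thus ?thesis using that by blast
      qed
      have "measure (P \<theta>) E \<le> e"
        unfolding E_def
        by (rule error_bound[OF rep _ _ _ _ inj code dec km refl]) (use h e ps pn in auto)
      moreover have "(INF \<theta>. measure (P \<theta>) E) \<le> measure (P \<theta>) E"
        by (rule cINF_lower) (auto intro: bdd_belowI[where m=0])
      ultimately show "(INF \<theta>. measure (P \<theta>) {\<omega>. \<psi> (Y \<omega>) \<noteq> S \<omega>}) < \<epsilon>"
        using e unfolding E_def by linarith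
    qed
  qed
qed

end
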